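(* Let $X_1,\dots,X_n$ be i.i.d. Bernoulli random variables with mean $p\in(0,1)$, $\overline{X}_n=\frac1n\sum_{i=1}^nX_i$, and for $z,p\in(0,1)$ let $\mathscr{M}(z,p)=\big(\frac pz\big)^z\big(\frac{1-p}{1-z}\big)^{1-z}$. Let $\varDelta=\min\Big\{\frac12,\ \frac{\mathscr{C}[z^2+(1-z)^2]}{\sqrt{nz(1-z)}}\Big\}$, where $\mathscr{C}$ is the Berry–Esseen constant. Then $$\Pr\{\overline{X}_n\le z\}\le\Big(\frac12+\varDelta\Big)[\mathscr{M}(z,p)]^n\quad\text{for }z\in(0,p),$$ $$\Pr\{\overline{X}_n\ge z\}\le\Big(\frac12+\varDelta\Big)[\mathscr{M}(z,p)]^n\quad\text{for }z\in(p,1).$$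
   Context: The Berry–Esseen constant $\mathscr{C}$ is a positive absolute constant such that for every random variable $Y$ with $\mathbb{E}[Y]=0$, $\mathbb{E}[Y^2]>0$, $\mathbb{E}[|Y|^3]<\infty$, every $n$ and every $y\in\mathbb{R}$, $|F_n(y)-\Phi(y)|\le\frac{\mathscr{C}}{\sqrt n}\frac{\mathbb{E}[|Y|^3]}{\mathbb{E}^{3/2}[Y^2]}$, where $F_n$ is the cdf of $\sum_{i=1}^nY_i/\sqrt{n\mathbb{E}[Y^2]}$ for i.i.d. copies $Y_i$ of $Y$ and $\Phi$ is the standard normal cdf. *)

theory Defs
  imports "HOL-Probability.Probability"
begin

definition std_normal_cdf :: "real \<Rightarrow> real" where
  "std_normal_cdf y = (LBINT x:{..y}. std_normal_density x)"

text \<open>Berry--Esseen property of a constant C: for every real random variable Y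
  (represented by its law mu, a probability measure on the reals) with E[Y] = 0,
  E[Y^2] > 0, E[|Y|^3] finite, every n >= 1 and every y, the cdf F_n of
  (Y_1 + ... + Y_n) / sqrt(n E[Y^2]) for i.i.d. copies Y_i of Y
  (realised as coordinates of the product measure) satisfies
  |F_n(y) - Phi(y)| <= C / sqrt n * E|Y|^3 / E[Y^2]^(3/2).\<close>
definition berry_esseen_constant :: "real \<Rightarrow> bool" where
  "berry_esseen_constant C \<longleftrightarrow> C > 0 \<and>
     (\<forall>\<mu> :: real measure. prob_space \<mu> \<longrightarrow> sets \<mu> = sets borel \<longrightarrow>
        integrable \<mu> (\<lambda>x. \<bar>x\<bar> ^ 3) \<longrightarrow>
        (\<integral>x. x \<partial>\<mu>) = 0 \<longrightarrow> (\<integral>x. x\<^sup>2 \<partial>\<mu>) > 0 \<longrightarrow>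
        (\<forall>n::nat. n \<ge> 1 \<longrightarrow> (\<forall>y::real.
           \<bar>measure (PiM {..<n} (\<lambda>_. \<mu>))
               {\<omega> \<in> space (PiM {..<n} (\<lambda>_. \<mu>)).
                  (\<Sum>i<n. \<omega> i) / sqrt (real n * (\<integral>x. x\<^sup>2 \<partial>\<mu>)) \<le> y}
             - std_normal_cdf y\<bar>
           \<le> C / sqrt (real n) * (\<integral>x. \<bar>x\<bar> ^ 3 \<partial>\<mu>) / (\<integral>x. x\<^sup>2 \<partial>\<mu>) powr (3/2))))"

definition chernoff_M :: "real \<Rightarrow> real \<Rightarrow> real" where
  "chernoff_M z p = (p / z) powr z * ((1 - p) / (1 - z)) powr (1 - z)"

end

theory Submission imports Defs begin

definition bmu :: "real \<Rightarrow> real \<Rightarrow> real \<Rightarrow> real measure" where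
  "bmu a c q = distr (measure_pmf (bernoulli_pmf q)) borel (\<lambda>b. if b then a else c)"

lemma sets_bmu[simp, measurable_cong]: "sets (bmu a c q) = sets borel"
  by (simp add: bmu_def)

lemma space_bmu[simp]: "space (bmu a c q) = UNIV"
  by (simp add: bmu_def)

lemma prob_space_bmu: "prob_space (bmu a c q)"
  unfolding bmu_def by (rule prob_space.prob_space_distr) (auto simp: prob_space_measure_pmf)

lemma nn_integral_bmu:
  assumes "0 \<le> q" "q \<le> 1" "h \<in> borel_measurable borel"
  shows "(\<integral>\<^sup>+x. h x \<partial>bmu a c q) = h a * ennreal q + h c * ennreal (1 - q)"
  using assms unfolding bmu_def
  by (subst nn_integral_distr) auto

lemma emeasure_bmu:
  assumes "0 \<le> q" "q \<le> 1" "A \<in> sets borel"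
  shows "emeasure (bmu a c q) A = indicator A a * ennreal q + indicator A c * ennreal (1 - q)"
proof -
  have "emeasure (bmu a c q) A = (\<integral>\<^sup>+x. indicator A x \<partial>bmu a c q)"
    using assms by simp
  also have "\<dots> = indicator A a * ennreal q + indicator A c * ennreal (1 - q)"
    using assms by (subst nn_integral_bmu) auto
  finally show ?thesis .
qed

lemma integrable_bmu: "integrable (bmu a c q) (h :: real \<Rightarrow> real)" if "h \<in> borel_measurable borel"
  unfolding bmu_def using that
  by (subst integrable_distr_eq) (auto intro!: integrable_measure_pmf_finite)

lemma integral_bmu:
  assumes "0 \<le> q" "q \<le> 1" "h \<in> borel_measurable borel"
  shows "(\<integral>x. h x \<partial>bmu a c q) = h a * q + h c * (1 - q)"
  using assms unfolding bmu_def
  by (subst integral_distr) auto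


lemma indicator_PiE_prod:
  assumes "finite I" "x \<in> Pi\<^sub>E I (\<lambda>_. UNIV)"
  shows "indicator (Pi\<^sub>E I A) x = (\<Prod>i\<in>I. indicator (A i) (x i) :: ennreal)"
  using assms by (auto simp: indicator_def PiE_def Pi_def prod_zero_iff)

lemma PiM_bmu_density:
  assumes I: "finite I" and p: "0 \<le> p" "p \<le> 1" and z: "0 \<le> z" "z \<le> 1"
    and g: "g \<in> borel_measurable borel" "\<And>y. 0 \<le> g y"
    and ga: "z * g a = p" and gc: "(1 - z) * g c = 1 - p"
  shows "PiM I (\<lambda>_. bmu a c p) = density (PiM I (\<lambda>_. bmu a c z)) (\<lambda>x. \<Prod>i\<in>I. ennreal (g (x i)))"
proof -
  interpret P: product_prob_space "\<lambda>_. bmu a c p" I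
    by (intro product_prob_spaceI) (rule prob_space_bmu)
  interpret Z: product_prob_space "\<lambda>_. bmu a c z" I
    by (intro product_prob_spaceI) (rule prob_space_bmu)
  have setsI: "sets (PiM I (\<lambda>_. bmu a c z)) = sets (PiM I (\<lambda>_. bmu a c p))"
    by (intro sets_PiM_cong) auto
  show ?thesis
  proof (rule P.PiM_eqI[symmetric])
    show "finite I" by fact
    show "sets (density (PiM I (\<lambda>_. bmu a c z)) (\<lambda>x. \<Prod>i\<in>I. ennreal (g (x i)))) = sets (PiM I (\<lambda>_. bmu a c p))"
      using setsI by simp
  next
    fix A assume A: "\<And>i. i \<in> I \<Longrightarrow> A i \<in> sets (bmu a c p)"
    have PA: "Pi\<^sub>E I A \<in> sets (PiM I (\<lambda>_. bmu a c z))"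
      using A by (intro sets_PiM_I_finite I) auto
    have "emeasure (density (PiM I (\<lambda>_. bmu a c z)) (\<lambda>x. \<Prod>i\<in>I. ennreal (g (x i)))) (Pi\<^sub>E I A)
       = (\<integral>\<^sup>+x. (\<Prod>i\<in>I. ennreal (g (x i))) * indicator (Pi\<^sub>E I A) x \<partial>PiM I (\<lambda>_. bmu a c z))"
      using PA g by (subst emeasure_density) auto
    also have "\<dots> = (\<integral>\<^sup>+x. (\<Prod>i\<in>I. ennreal (g (x i)) * indicator (A i) (x i)) \<partial>PiM I (\<lambda>_. bmu a c z))"
    proof (intro nn_integral_cong)
    fix x assume "x \<in> space (PiM I (\<lambda>_. bmu a c z))"
    then have "x \<in> Pi\<^sub>E I (\<lambda>_. UNIV)" by (simp add: space_PiM)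
    then show "(\<Prod>i\<in>I. ennreal (g (x i))) * indicator (Pi\<^sub>E I A) x = (\<Prod>i\<in>I. ennreal (g (x i)) * indicator (A i) (x i))"
      by (simp add: indicator_PiE_prod[OF I] prod.distrib)
  qed
    also have "\<dots> = (\<Prod>i\<in>I. (\<integral>\<^sup>+y. ennreal (g y) * indicator (A i) y \<partial>bmu a c z))"
      using A g by (intro Z.product_nn_integral_prod I) auto
    also have "\<dots> = (\<Prod>i\<in>I. emeasure (bmu a c p) (A i))"
    proof (intro prod.cong refl)
      fix i assume i: "i \<in> I"
      have "(\<integral>\<^sup>+y. ennreal (g y) * indicator (A i) y \<partial>bmu a c z)
          = ennreal (g a) * indicator (A i) a * ennreal z + ennreal (g c) * indicator (A i) c * ennreal (1 - z)"
        using A[OF i] g z by (subst nn_integral_bmu) auto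
      also have "\<dots> = indicator (A i) a * ennreal p + indicator (A i) c * ennreal (1 - p)"
        using ga gc g z
        by (auto simp: indicator_def ennreal_mult'[symmetric] mult.commute)
      also have "\<dots> = emeasure (bmu a c p) (A i)"
        using A[OF i] p by (subst emeasure_bmu) auto
      finally show "(\<integral>\<^sup>+y. ennreal (g y) * indicator (A i) y \<partial>bmu a c z) = emeasure (bmu a c p) (A i)" .
    qed
    finally show "emeasure (density (PiM I (\<lambda>_. bmu a c z)) (\<lambda>x. \<Prod>i\<in>I. ennreal (g (x i)))) (Pi\<^sub>E I A)
       = (\<Prod>i\<in>I. emeasure (bmu a c p) (A i))" .
  qed
qed


lemma prob_space_PiM_bmu: "prob_space (PiM I (\<lambda>_. bmu a c q))"
  by (intro prob_space_PiM prob_space_bmu)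

lemma PiM_bmu_le:
  assumes I: "finite I" and p: "0 \<le> p" "p \<le> 1" and z: "0 \<le> z" "z \<le> 1"
    and g: "g \<in> borel_measurable borel" "\<And>y. 0 \<le> g y"
    and ga: "z * g a = p" and gc: "(1 - z) * g c = 1 - p"
    and K: "0 \<le> K" "\<And>x. (\<Sum>i\<in>I. x i) \<le> 0 \<Longrightarrow> (\<Prod>i\<in>I. g (x i)) \<le> K"
  shows "measure (PiM I (\<lambda>_. bmu a c p)) {x \<in> space (PiM I (\<lambda>_. bmu a c p)). (\<Sum>i\<in>I. x i) \<le> 0}
     \<le> K * measure (PiM I (\<lambda>_. bmu a c z)) {x \<in> space (PiM I (\<lambda>_. bmu a c z)). (\<Sum>i\<in>I. x i) \<le> 0}"
proof -
  let ?N = "PiM I (\<lambda>_. bmu a c z)"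
  let ?E = "{x \<in> space ?N. (\<Sum>i\<in>I. x i) \<le> 0}"
  interpret Pp: prob_space "PiM I (\<lambda>_. bmu a c p)" by (rule prob_space_PiM_bmu)
  interpret Pz: prob_space ?N by (rule prob_space_PiM_bmu)
  have sp: "space (PiM I (\<lambda>_. bmu a c p)) = space ?N"
    by (simp add: space_PiM)
  have E: "?E \<in> sets ?N" by measurable
  have "emeasure (PiM I (\<lambda>_. bmu a c p)) ?E = emeasure (density ?N (\<lambda>x. \<Prod>i\<in>I. ennreal (g (x i)))) ?E"
    by (subst PiM_bmu_density[OF I p z g ga gc]) rule
  also have "\<dots> = (\<integral>\<^sup>+x. (\<Prod>i\<in>I. ennreal (g (x i))) * indicator ?E x \<partial>?N)"
    using E g by (subst emeasure_density) auto
  also have "\<dots> \<le> (\<integral>\<^sup>+x. ennreal K * indicator ?E x \<partial>?N)"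
  proof (intro nn_integral_mono)
    fix x assume "x \<in> space ?N"
    show "(\<Prod>i\<in>I. ennreal (g (x i))) * indicator ?E x \<le> ennreal K * indicator ?E x"
    proof (cases "x \<in> ?E")
      case True
      then have "(\<Prod>i\<in>I. g (x i)) \<le> K" using K by auto
      then show ?thesis using True g by (simp add: prod_ennreal ennreal_leI)
    qed simp
  qed
  also have "\<dots> = ennreal K * emeasure ?N ?E"
    using E by (simp add: nn_integral_cmult_indicator)
  finally have "ennreal (measure (PiM I (\<lambda>_. bmu a c p)) ?E) \<le> ennreal (K * measure ?N ?E)"
    by (simp add: Pp.emeasure_eq_measure Pz.emeasure_eq_measure ennreal_mult K)
  then show ?thesis using sp K by (simp add: ennreal_le_iff)
qed


lemma std_normal_cdf_0: "std_normal_cdf 0 = 1/2"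
proof -
  let ?f = "std_normal_density"
  have int: "integrable lborel ?f" by simp
  have intI: "integrable lborel (\<lambda>x. indicator S x * ?f x)" if "S \<in> sets borel" for S :: "real set"
    using integrable_real_mult_indicator[of S lborel ?f] that int by (simp add: mult.commute)
  have "(\<integral>x. indicator {..0} x * ?f x \<partial>lborel) = (\<integral>x. indicator {..0} x * ?f x \<partial>distr lborel borel uminus)"
    by (simp add: lborel_distr_uminus)
  also have "\<dots> = (\<integral>x. indicator {..0} (-x) * ?f (-x) \<partial>lborel)"
    by (subst integral_distr) auto
  also have "\<dots> = (\<integral>x. indicator {0..} x * ?f x \<partial>lborel)"
    by (intro Bochner_Integration.integral_cong) (auto simp: indicator_def normal_density_def)
  also have "\<dots> = (\<integral>x. indicator {0<..} x * ?f x \<partial>lborel)"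
    by (intro integral_cong_AE eventually_mono[OF AE_lborel_singleton[of 0]]) (auto simp: indicator_def)
  finally have eq: "(\<integral>x. indicator {..0} x * ?f x \<partial>lborel) = (\<integral>x. indicator {0<..} x * ?f x \<partial>lborel)" .
  have "(\<integral>x. indicator {..0} x * ?f x \<partial>lborel) + (\<integral>x. indicator {0<..} x * ?f x \<partial>lborel)
      = (\<integral>x. indicator {..0} x * ?f x + indicator {0<..} x * ?f x \<partial>lborel)"
    by (intro Bochner_Integration.integral_add[symmetric] intI) auto
  also have "\<dots> = (\<integral>x. ?f x \<partial>lborel)"
    by (intro Bochner_Integration.integral_cong) (auto simp: indicator_def)
  also have "\<dots> = 1" by simp
  finally have "(\<integral>x. indicator {..0} x * ?f x \<partial>lborel) = 1/2" using eq by simp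
  then show ?thesis by (simp add: std_normal_cdf_def set_lebesgue_integral_def)
qed


lemma BE_bmu:
  assumes C: "berry_esseen_constant C" and z: "0 < z" "z < 1" and n: "n \<ge> 1"
    and ac: "(a = 1 - z \<and> c = - z) \<or> (a = z - 1 \<and> c = z)"
  shows "measure (PiM {..<n} (\<lambda>_. bmu a c z)) {\<omega> \<in> space (PiM {..<n} (\<lambda>_. bmu a c z)). (\<Sum>i<n. \<omega> i) \<le> 0}
     \<le> 1/2 + C * (z\<^sup>2 + (1 - z)\<^sup>2) / sqrt (real n * z * (1 - z))"
proof -
  let ?\<mu> = "bmu a c z"
  let ?P = "PiM {..<n} (\<lambda>_. ?\<mu>)"
  define v where "v = z * (1 - z)"
  define w where "w = z\<^sup>2 + (1 - z)\<^sup>2"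
  have v: "v > 0" using z by (simp add: v_def)
  have m1: "(\<integral>x. x \<partial>?\<mu>) = 0"
    using ac z by (elim disjE conjE; hypsubst; simp add: integral_bmu algebra_simps)
  have m2: "(\<integral>x. x\<^sup>2 \<partial>?\<mu>) = v"
    using ac z by (elim disjE conjE; hypsubst; simp add: integral_bmu v_def power2_eq_square algebra_simps)
  have m3: "(\<integral>x. \<bar>x\<bar>^3 \<partial>?\<mu>) = v * w"
  proof -
    have "\<bar>1 - z\<bar> = 1 - z" "\<bar>z - 1\<bar> = 1 - z" "\<bar>-z\<bar> = z" "\<bar>z\<bar> = z" using z by auto
    then show ?thesis
      using ac z by (elim disjE conjE; hypsubst; simp add: integral_bmu v_def w_def power2_eq_square power3_eq_cube algebra_simps)
  qed
  have "\<bar>measure ?P {\<omega> \<in> space ?P. (\<Sum>i<n. \<omega> i) / sqrt (real n * (\<integral>x. x\<^sup>2 \<partial>?\<mu>)) \<le> 0} - std_normal_cdf 0\<bar>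
      \<le> C / sqrt (real n) * (\<integral>x. \<bar>x\<bar> ^ 3 \<partial>?\<mu>) / (\<integral>x. x\<^sup>2 \<partial>?\<mu>) powr (3/2)"
    using C n v m1 m2 unfolding berry_esseen_constant_def
    by (auto intro!: prob_space_bmu integrable_bmu)
  moreover have "{\<omega> \<in> space ?P. (\<Sum>i<n. \<omega> i) / sqrt (real n * (\<integral>x. x\<^sup>2 \<partial>?\<mu>)) \<le> 0}
      = {\<omega> \<in> space ?P. (\<Sum>i<n. \<omega> i) \<le> 0}"
  proof -
    have nv: "real n * (\<integral>x. x\<^sup>2 \<partial>?\<mu>) > 0" using v n m2 by simp
    then show ?thesis by (auto simp: divide_le_0_iff)
  qed
  moreover have "C / sqrt (real n) * (v * w) / v powr (3/2) = C * w / sqrt (real n * z * (1 - z))"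
  proof -
    have "v powr (3/2) = v * sqrt v"
    proof -
      have "v powr (3/2) = v powr (1 + 1/2)" by simp
      also have "\<dots> = v * v powr (1/2)" using v by (subst powr_add) simp
      also have "\<dots> = v * sqrt v" using v by (subst powr_half_sqrt) auto
      finally show ?thesis .
    qed
    moreover have "sqrt (real n * z * (1 - z)) = sqrt (real n) * sqrt v"
      by (simp add: v_def real_sqrt_mult mult.assoc)
    ultimately show ?thesis using v by (simp add: field_simps)
  qed
  ultimately show ?thesis
    using m2 m3 by (simp add: std_normal_cdf_0 w_def abs_le_iff)
qed


lemma distr_Y_bmu:
  fixes X :: "'a \<Rightarrow> real" and h :: "real \<Rightarrow> real"
  assumes P: "prob_space M" and Xm: "X \<in> borel_measurable M"
    and p: "0 \<le> p" "p \<le> 1"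
    and X1: "measure M {\<omega> \<in> space M. X \<omega> = 1} = p"
    and X0: "measure M {\<omega> \<in> space M. X \<omega> = 0} = 1 - p"
    and that: "h \<in> borel_measurable borel"
  shows "distr M borel (\<lambda>\<omega>. h (X \<omega>)) = bmu (h 1) (h 0) p"
proof -
  interpret prob_space M by fact
  let ?S1 = "{\<omega> \<in> space M. X \<omega> = 1}" and ?S0 = "{\<omega> \<in> space M. X \<omega> = 0}"
  have Sv: "{\<omega> \<in> space M. X \<omega> = v} \<in> events" for v
  proof -
    have "{\<omega> \<in> space M. X \<omega> = v} = X -` {v} \<inter> space M" by auto
    then show ?thesis using measurable_sets[OF Xm, of "{v}"] by (simp add: borel_closed)
  qed
  have S1: "?S1 \<in> events" and S0: "?S0 \<in> events" using Sv by auto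
  have U: "prob (?S1 \<union> ?S0) = 1"
    using S1 S0 X1 X0 by (subst finite_measure_Union) auto
  have null: "prob (space M - (?S1 \<union> ?S0)) = 0"
    using U S1 S0 by (subst finite_measure_compl) (auto simp: prob_space)
  show ?thesis
  proof (rule measure_eqI)
    show "sets (distr M borel (\<lambda>\<omega>. h (X \<omega>))) = sets (bmu (h 1) (h 0) p)" by simp
  next
    fix A assume "A \<in> sets (distr M borel (\<lambda>\<omega>. h (X \<omega>)))"
    then have A: "A \<in> sets borel" by simp
    let ?B = "(\<lambda>\<omega>. h (X \<omega>)) -` A \<inter> space M"
    have B: "?B \<in> events" using A Xm that by measurable
    have "prob ?B = prob (?B \<inter> (?S1 \<union> ?S0)) + prob (?B - (?S1 \<union> ?S0))"
    proof -
      have "?B = (?B \<inter> (?S1 \<union> ?S0)) \<union> (?B - (?S1 \<union> ?S0))" by blast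
      then have "prob ?B = prob ((?B \<inter> (?S1 \<union> ?S0)) \<union> (?B - (?S1 \<union> ?S0)))" by simp
      also have "\<dots> = prob (?B \<inter> (?S1 \<union> ?S0)) + prob (?B - (?S1 \<union> ?S0))"
        using B S1 S0 by (intro finite_measure_Union) auto
      finally show ?thesis .
    qed
    also have "prob (?B - (?S1 \<union> ?S0)) = 0"
    proof -
      have "prob (?B - (?S1 \<union> ?S0)) \<le> prob (space M - (?S1 \<union> ?S0))"
        using S1 S0 by (intro finite_measure_mono) auto
      then show ?thesis using null measure_nonneg[of M "?B - (?S1 \<union> ?S0)"] by linarith
    qed
    also have "?B \<inter> (?S1 \<union> ?S0) = (?B \<inter> ?S1) \<union> (?B \<inter> ?S0)" by auto
    also have "prob \<dots> = prob (?B \<inter> ?S1) + prob (?B \<inter> ?S0)"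
      using B S1 S0 by (subst finite_measure_Union) auto
    also have "?B \<inter> ?S1 = (if h 1 \<in> A then ?S1 else {})" by auto
    also have "?B \<inter> ?S0 = (if h 0 \<in> A then ?S0 else {})" by auto
    finally have "prob ?B = indicator A (h 1) * p + indicator A (h 0) * (1 - p)"
      using X1 X0 by (simp add: indicator_def)
    then show "emeasure (distr M borel (\<lambda>\<omega>. h (X \<omega>))) A = emeasure (bmu (h 1) (h 0) p) A"
      using A Xm that p
      by (simp add: emeasure_distr emeasure_eq_measure emeasure_bmu indicator_def)
  qed
qed


lemma reorder_bmu:
  fixes n :: nat
  assumes "0 \<le> z" "z \<le> 1"
  shows "measure (PiM {1..n} (\<lambda>_. bmu a c z)) {x \<in> space (PiM {1..n} (\<lambda>_. bmu a c z)). (\<Sum>i\<in>{1..n}. x i) \<le> 0}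
       = measure (PiM {..<n} (\<lambda>_. bmu a c z)) {x \<in> space (PiM {..<n} (\<lambda>_. bmu a c z)). (\<Sum>i<n. x i) \<le> 0}"
proof -
  interpret P: product_prob_space "\<lambda>_. bmu a c z" "{1..n}"
    by (intro product_prob_spaceI) (rule prob_space_bmu)
  let ?f = "\<lambda>\<omega>. \<lambda>i\<in>{..<n}. \<omega> (Suc i)"
  have D: "distr (PiM {1..n} (\<lambda>_. bmu a c z)) (PiM {..<n} (\<lambda>_. bmu a c z)) ?f = PiM {..<n} (\<lambda>_. bmu a c z)"
    using P.distr_reorder[of Suc "{..<n}" "{1..n}"] by auto
  have fm: "?f \<in> measurable (PiM {1..n} (\<lambda>_. bmu a c z)) (PiM {..<n} (\<lambda>_. bmu a c z))"
    by (intro measurable_restrict) auto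
  let ?E = "{x \<in> space (PiM {..<n} (\<lambda>_. bmu a c z)). (\<Sum>i<n. x i) \<le> 0}"
  have E: "?E \<in> sets (PiM {..<n} (\<lambda>_. bmu a c z))" by measurable
  have "measure (PiM {..<n} (\<lambda>_. bmu a c z)) ?E = measure (PiM {1..n} (\<lambda>_. bmu a c z)) (?f -` ?E \<inter> space (PiM {1..n} (\<lambda>_. bmu a c z)))"
    by (subst D[symmetric]) (rule measure_distr[OF fm E])
  also have "?f -` ?E \<inter> space (PiM {1..n} (\<lambda>_. bmu a c z)) = {x \<in> space (PiM {1..n} (\<lambda>_. bmu a c z)). (\<Sum>i\<in>{1..n}. x i) \<le> 0}"
  proof -
    have "(\<Sum>i\<in>{1..n}. x i) = (\<Sum>i<n. x (Suc i))" for x :: "nat \<Rightarrow> real"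
      by (subst image_Suc_lessThan[symmetric], subst sum.reindex) auto
    then show ?thesis by (auto simp: space_PiM)
  qed
  finally show ?thesis by simp
qed


lemma main_sigma:
  fixes M :: "'a measure" and X :: "nat \<Rightarrow> 'a \<Rightarrow> real"
    and n :: nat and p z C \<sigma> :: real
  assumes PM: "prob_space M"
    and C: "berry_esseen_constant C"
    and n: "n \<ge> 1"
    and p: "0 < p" "p < 1" and z: "0 < z" "z < 1"
    and Xm: "\<And>i. i \<in> {1..n} \<Longrightarrow> X i \<in> borel_measurable M"
    and ind: "prob_space.indep_vars M (\<lambda>_. borel) X {1..n}"
    and X1: "\<And>i. i \<in> {1..n} \<Longrightarrow> measure M {\<omega> \<in> space M. X i \<omega> = 1} = p"
    and X0: "\<And>i. i \<in> {1..n} \<Longrightarrow> measure M {\<omega> \<in> space M. X i \<omega> = 0} = 1 - p"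
    and sig: "\<sigma> = 1 \<or> \<sigma> = -1"
    and s: "\<sigma> * (ln (p/z) - ln ((1-p)/(1-z))) \<ge> 0"
  shows "measure M {\<omega> \<in> space M. \<sigma> * ((\<Sum>i=1..n. X i \<omega>) - real n * z) \<le> 0}
     \<le> (1/2 + min (1/2) (C * (z\<^sup>2 + (1 - z)\<^sup>2) / sqrt (real n * z * (1 - z)))) * chernoff_M z p ^ n"
proof -
  interpret prob_space M by fact
  let ?I = "{1..n}"
  define h where "h x = \<sigma> * (x - z)" for x :: real
  define a where "a = h 1"
  define c where "c = h 0"
  define A where "A = ln (p/z)"
  define B where "B = ln ((1-p)/(1-z))"
  define L where "L = z * A + (1 - z) * B"
  define s where "s = \<sigma> * (A - B)"
  define g where "g y = exp (L + s * y)" for y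
  define Y where "Y i \<omega> = h (X i \<omega>)" for i \<omega>
  have hm: "h \<in> borel_measurable borel" unfolding h_def by measurable
  have ss: "\<sigma> * \<sigma> = 1" using sig by auto
  have ac: "(a = 1 - z \<and> c = - z) \<or> (a = z - 1 \<and> c = z)"
    using sig by (auto simp: a_def c_def h_def)
  have dY: "distr M borel (Y i) = bmu a c p" if "i \<in> ?I" for i
    unfolding Y_def a_def c_def
    by (rule distr_Y_bmu[OF PM Xm[OF that] _ _ X1[OF that] X0[OF that] hm]) (use p in auto)
  have indY: "indep_vars (\<lambda>_. borel) Y ?I"
    unfolding Y_def by (rule indep_vars_compose2[OF ind]) (rule hm)
  have Ym: "Y i \<in> borel_measurable M" if "i \<in> ?I" for i
    unfolding Y_def using Xm[OF that] hm by measurable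
  have DD: "distr M (PiM ?I (\<lambda>_. borel)) (\<lambda>\<omega>. \<lambda>i\<in>?I. Y i \<omega>) = PiM ?I (\<lambda>_. bmu a c p)"
  proof -
    have "distr M (PiM ?I (\<lambda>_. borel)) (\<lambda>\<omega>. \<lambda>i\<in>?I. Y i \<omega>) = PiM ?I (\<lambda>i. distr M borel (Y i))"
      using indY n by (subst (asm) indep_vars_iff_distr_eq_PiM') (auto intro: Ym)
    also have "\<dots> = PiM ?I (\<lambda>_. bmu a c p)"
      by (intro PiM_cong refl dY)
    finally show ?thesis .
  qed
  let ?E = "{x \<in> space (PiM ?I (\<lambda>_. borel :: real measure)). (\<Sum>i\<in>?I. x i) \<le> 0}"
  have E: "?E \<in> sets (PiM ?I (\<lambda>_. borel))" by measurable
  have Fm: "(\<lambda>\<omega>. \<lambda>i\<in>?I. Y i \<omega>) \<in> measurable M (PiM ?I (\<lambda>_. borel))"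
    by (intro measurable_restrict Ym)
  have sumY: "(\<Sum>i\<in>?I. Y i \<omega>) = \<sigma> * ((\<Sum>i=1..n. X i \<omega>) - real n * z)" for \<omega>
    by (simp add: Y_def h_def sum_distrib_left[symmetric] sum_subtractf)
  have "{\<omega> \<in> space M. \<sigma> * ((\<Sum>i=1..n. X i \<omega>) - real n * z) \<le> 0}
      = (\<lambda>\<omega>. \<lambda>i\<in>?I. Y i \<omega>) -` ?E \<inter> space M"
    using Fm sumY by (auto simp: measurable_space space_PiM)
  then have "measure M {\<omega> \<in> space M. \<sigma> * ((\<Sum>i=1..n. X i \<omega>) - real n * z) \<le> 0}
      = measure (PiM ?I (\<lambda>_. bmu a c p)) ?E"
    using measure_distr[OF Fm E] DD by simp
  also have "?E = {x \<in> space (PiM ?I (\<lambda>_. bmu a c p)). (\<Sum>i\<in>?I. x i) \<le> 0}"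
    by (simp add: space_PiM)
  also have "measure (PiM ?I (\<lambda>_. bmu a c p)) \<dots>
      \<le> exp L ^ n * measure (PiM ?I (\<lambda>_. bmu a c z)) {x \<in> space (PiM ?I (\<lambda>_. bmu a c z)). (\<Sum>i\<in>?I. x i) \<le> 0}"
  proof (rule PiM_bmu_le)
    show "g \<in> borel_measurable borel" unfolding g_def by measurable
    show "z * g a = p"
    proof -
      have "s * a = (\<sigma> * \<sigma>) * ((A - B) * (1 - z))"
        unfolding s_def a_def h_def by (simp add: algebra_simps)
      then have "s * a = (A - B) * (1 - z)" using ss by simp
      then have "L + s * a = A" by (simp add: L_def algebra_simps)
      then show ?thesis using p z by (simp add: g_def A_def)
    qed
    show "(1 - z) * g c = 1 - p"
    proof -
      have "s * c = (\<sigma> * \<sigma>) * ((A - B) * (- z))"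
        unfolding s_def c_def h_def by (simp add: algebra_simps)
      then have "s * c = (A - B) * (- z)" using ss by simp
      then have "L + s * c = B" by (simp add: L_def algebra_simps)
      then show ?thesis using p z by (simp add: g_def B_def)
    qed
    fix x :: "nat \<Rightarrow> real" assume x: "(\<Sum>i\<in>?I. x i) \<le> 0"
    have "(\<Prod>i\<in>?I. g (x i)) = exp (\<Sum>i\<in>?I. L + s * x i)"
      by (simp add: g_def exp_sum)
    also have "(\<Sum>i\<in>?I. L + s * x i) = real n * L + s * (\<Sum>i\<in>?I. x i)"
      by (simp add: sum.distrib sum_distrib_left)
    also have "exp \<dots> \<le> exp (real n * L)"
      using x s by (simp add: s_def A_def B_def mult_nonneg_nonpos)
    also have "\<dots> = exp L ^ n" by (simp add: exp_of_nat_mult)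
    finally show "(\<Prod>i\<in>?I. g (x i)) \<le> exp L ^ n" .
  qed (use p z in \<open>auto simp: g_def\<close>)
  also have "measure (PiM ?I (\<lambda>_. bmu a c z)) {x \<in> space (PiM ?I (\<lambda>_. bmu a c z)). (\<Sum>i\<in>?I. x i) \<le> 0}
      = measure (PiM {..<n} (\<lambda>_. bmu a c z)) {x \<in> space (PiM {..<n} (\<lambda>_. bmu a c z)). (\<Sum>i<n. x i) \<le> 0}"
    using z by (intro reorder_bmu) auto
  also have "exp L = chernoff_M z p"
    using p z by (simp add: chernoff_M_def powr_def L_def A_def B_def exp_add)
  finally have main: "measure M {\<omega> \<in> space M. \<sigma> * ((\<Sum>i=1..n. X i \<omega>) - real n * z) \<le> 0}
     \<le> chernoff_M z p ^ n * measure (PiM {..<n} (\<lambda>_. bmu a c z)) {x \<in> space (PiM {..<n} (\<lambda>_. bmu a c z)). (\<Sum>i<n. x i) \<le> 0}" .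
  let ?Pz = "measure (PiM {..<n} (\<lambda>_. bmu a c z)) {x \<in> space (PiM {..<n} (\<lambda>_. bmu a c z)). (\<Sum>i<n. x i) \<le> 0}"
  have le1: "?Pz \<le> 1"
  proof -
    interpret Q: prob_space "PiM {..<n} (\<lambda>_. bmu a c z)" by (rule prob_space_PiM_bmu)
    show ?thesis by simp
  qed
  have le2: "?Pz \<le> 1/2 + C * (z\<^sup>2 + (1 - z)\<^sup>2) / sqrt (real n * z * (1 - z))"
    by (rule BE_bmu[OF C z n ac])
  have "?Pz \<le> 1/2 + min (1/2) (C * (z\<^sup>2 + (1 - z)\<^sup>2) / sqrt (real n * z * (1 - z)))"
    using le1 le2 by (simp add: min_def)
  moreover have "chernoff_M z p \<ge> 0" unfolding chernoff_M_def by simp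
  ultimately show ?thesis
    using main by (smt (verit) mult.commute mult_left_mono zero_le_power)
qed


theorem theorem6:
  fixes M :: "'a measure" and X :: "nat \<Rightarrow> 'a \<Rightarrow> real"
    and n :: nat and p z C :: real
  assumes "prob_space M"
    and "berry_esseen_constant C"
    and "n \<ge> 1"
    and "0 < p" "p < 1"
    and "\<And>i. i \<in> {1..n} \<Longrightarrow> X i \<in> borel_measurable M"
    and "prob_space.indep_vars M (\<lambda>_. borel) X {1..n}"
    and "\<And>i. i \<in> {1..n} \<Longrightarrow> measure M {\<omega> \<in> space M. X i \<omega> = 1} = p"
    and "\<And>i. i \<in> {1..n} \<Longrightarrow> measure M {\<omega> \<in> space M. X i \<omega> = 0} = 1 - p"
  shows "(0 < z \<and> z < p \<longrightarrow>
           measure M {\<omega> \<in> space M. (\<Sum>i=1..n. X i \<omega>) / real n \<le> z}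
             \<le> (1/2 + min (1/2) (C * (z\<^sup>2 + (1 - z)\<^sup>2) / sqrt (real n * z * (1 - z))))
                * chernoff_M z p ^ n) \<and>
         (p < z \<and> z < 1 \<longrightarrow>
           measure M {\<omega> \<in> space M. (\<Sum>i=1..n. X i \<omega>) / real n \<ge> z}
             \<le> (1/2 + min (1/2) (C * (z\<^sup>2 + (1 - z)\<^sup>2) / sqrt (real n * z * (1 - z))))
                * chernoff_M z p ^ n)"
proof (intro conjI impI; elim conjE)
  have npos: "real n > 0" using assms(3) by simp
  {
    assume z: "0 < z" "z < p"
    have "ln (p/z) > 0" using z by simp
    moreover have "ln ((1-p)/(1-z)) < 0" using z assms(4,5) by simp
    ultimately have s: "1 * (ln (p/z) - ln ((1-p)/(1-z))) \<ge> 0" by simp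
    have "{\<omega> \<in> space M. (\<Sum>i=1..n. X i \<omega>) / real n \<le> z}
        = {\<omega> \<in> space M. 1 * ((\<Sum>i=1..n. X i \<omega>) - real n * z) \<le> 0}"
      using npos by (auto simp: pos_divide_le_eq mult.commute)
    with main_sigma[OF assms(1-3) assms(4,5) z(1) _ assms(6-9) _ s] z assms(5)
    show "measure M {\<omega> \<in> space M. (\<Sum>i=1..n. X i \<omega>) / real n \<le> z}
             \<le> (1/2 + min (1/2) (C * (z\<^sup>2 + (1 - z)\<^sup>2) / sqrt (real n * z * (1 - z))))
                * chernoff_M z p ^ n" by simp
  next
    assume z: "p < z" "z < 1"
    have "ln (p/z) < 0" using z assms(4) by simp
    moreover have "ln ((1-p)/(1-z)) > 0" using z assms(4,5) by simp
    ultimately have s: "(-1) * (ln (p/z) - ln ((1-p)/(1-z))) \<ge> 0" by simp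
    have "{\<omega> \<in> space M. (\<Sum>i=1..n. X i \<omega>) / real n \<ge> z}
        = {\<omega> \<in> space M. (-1) * ((\<Sum>i=1..n. X i \<omega>) - real n * z) \<le> 0}"
      using npos by (auto simp: pos_le_divide_eq mult.commute)
    with main_sigma[OF assms(1-3) assms(4,5) _ z(2) assms(6-9) _ s] z assms(4)
    show "measure M {\<omega> \<in> space M. (\<Sum>i=1..n. X i \<omega>) / real n \<ge> z}
             \<le> (1/2 + min (1/2) (C * (z\<^sup>2 + (1 - z)\<^sup>2) / sqrt (real n * z * (1 - z))))
                * chernoff_M z p ^ n" by simp
  }
qed

end
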